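(* Let $A$ and $B$ be positive definite $d\times d$ matrices, $\lambda\in(0,1)$, and denote $(A,B)_\lambda=\lambda A+(1-\lambda)B$ and $(A^2,B^2)_\lambda=\lambda A^2+(1-\lambda)B^2$. Then $$\mathrm{Tr}\left(\sqrt{(A^2,B^2)_\lambda}-(A,B)_\lambda\right)=\lambda(1-\lambda)\,\mathrm{Tr}\left((A-B)^2\left(\sqrt{(A^2,B^2)_\lambda}+(A,B)_\lambda\right)^{-1}\right).$$
   Context: $\sqrt{\cdot}$ denotes the positive semidefinite square root of a positive definite matrix. *)

theory Defs
  imports "HOL-Analysis.Analysis"
begin

definition cadjoint :: "complex^'n^'n \<Rightarrow> complex^'n^'n" where
  "cadjoint A = (\<chi> i j. cnj (A $ j $ i))"

definition qform :: "complex^'n^'n \<Rightarrow> complex^'n \<Rightarrow> complex" where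
  "qform A x = (\<Sum>i\<in>UNIV. cnj (x $ i) * (A *v x) $ i)"

definition pos_def_mat :: "complex^'n^'n \<Rightarrow> bool" where
  "pos_def_mat A \<longleftrightarrow> cadjoint A = A \<and> (\<forall>x. x \<noteq> 0 \<longrightarrow> 0 < Re (qform A x))"

definition pos_semidef_mat :: "complex^'n^'n \<Rightarrow> bool" where
  "pos_semidef_mat A \<longleftrightarrow> cadjoint A = A \<and> (\<forall>x. 0 \<le> Re (qform A x))"

definition msqrt :: "complex^'n^'n \<Rightarrow> complex^'n^'n" where
  "msqrt A = (THE S. pos_semidef_mat S \<and> S ** S = A)"

end

theory Submission imports Defs "HOL-Computational_Algebra.Fundamental_Theorem_Algebra"
begin


lemma mat_mult_left_nth: "(mat c ** (X::complex^'n^'n)) $ i $ j = c * X $ i $ j"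
  by (simp add: matrix_matrix_mult_def mat_def if_distrib if_distribR sum.delta cong: if_cong)

lemma mat_mult_right_nth: "((X::complex^'n^'n) ** mat c) $ i $ j = X $ i $ j * c"
  by (simp add: matrix_matrix_mult_def mat_def if_distrib if_distribR sum.delta' cong: if_cong)

lemma mat_comm: "mat c ** (X::complex^'n^'n) = X ** mat c"
  by (simp add: vec_eq_iff mat_mult_left_nth mat_mult_right_nth mult.commute)

lemma mat_mat: "mat a ** (mat b :: complex^'n^'n) = mat (a * b)"
  by (simp add: vec_eq_iff mat_mult_left_nth) (simp add: mat_def)

lemma mat_add: "mat a + (mat b :: complex^'n^'n) = mat (a + b)"
  by (simp add: vec_eq_iff mat_def)

lemma mat_diff: "mat a - (mat b :: complex^'n^'n) = mat (a - b)"
  by (simp add: vec_eq_iff mat_def)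

lemma matrix_add_rdistrib': "((A::complex^'n^'n) + B) ** C = A ** C + B ** C"
  by (simp add: matrix_matrix_mult_def vec_eq_iff sum.distrib distrib_right)

lemma matrix_diff_rdistrib': "((A::complex^'n^'n) - B) ** C = A ** C - B ** C"
  by (simp add: matrix_matrix_mult_def vec_eq_iff sum_subtractf left_diff_distrib)

lemma matrix_diff_ldistrib': "(C::complex^'n^'n) ** (A - B) = C ** A - C ** B"
  by (simp add: matrix_matrix_mult_def vec_eq_iff sum_subtractf right_diff_distrib)

lemma mat_scaleR: "mat (complex_of_real r) ** (X::complex^'n^'n) = r *\<^sub>R X"
  apply (simp add: vec_eq_iff mat_mult_left_nth)
  apply (simp add: scaleR_conv_of_real)
  done

lemma mat_one_neq0: "mat 1 \<noteq> (0::complex^'n^'n)"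
proof
  assume "mat 1 = (0::complex^'n^'n)"
  then have "(mat 1::complex^'n^'n) $ undefined $ undefined = 0" by simp
  then show False by (simp add: mat_def)
qed

lemma cadjoint_nth: "cadjoint A $ i $ j = cnj (A $ j $ i)"
  by (simp add: cadjoint_def)

lemma cadjoint_add: "cadjoint ((A::complex^'n^'n) + B) = cadjoint A + cadjoint B"
  by (simp add: vec_eq_iff cadjoint_nth)

lemma cadjoint_diff: "cadjoint ((A::complex^'n^'n) - B) = cadjoint A - cadjoint B"
  by (simp add: vec_eq_iff cadjoint_nth)

lemma cadjoint_mult: "cadjoint ((A::complex^'n^'n) ** B) = cadjoint B ** cadjoint A"
  by (simp add: vec_eq_iff cadjoint_nth matrix_matrix_mult_def mult.commute)

lemma cadjoint_mat: "cadjoint (mat a :: complex^'n^'n) = mat (cnj a)"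
  by (simp add: vec_eq_iff cadjoint_nth mat_def)

lemma cadjoint_zero: "cadjoint (0 :: complex^'n^'n) = 0"
  by (simp add: vec_eq_iff cadjoint_nth)

lemma cadjoint_scaleR: "cadjoint (r *\<^sub>R (A :: complex^'n^'n)) = r *\<^sub>R cadjoint A"
  by (simp add: vec_eq_iff cadjoint_nth)

definition ip :: "complex^'n \<Rightarrow> complex^'n \<Rightarrow> complex" where
  "ip x y = (\<Sum>i\<in>UNIV. cnj (x $ i) * y $ i)"

lemma qform_ip: "qform A x = ip x (A *v x)"
  by (simp add: qform_def ip_def)

lemma ip_adj: "ip x ((A::complex^'n^'n) *v y) = ip (cadjoint A *v x) y"
  unfolding ip_def matrix_vector_mult_def cadjoint_nth
  apply (simp add: sum_distrib_left sum_distrib_right)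
  apply (subst sum.swap)
  apply (simp add: mult_ac)
  done

lemma cnj_mult_self: "cnj z * z = complex_of_real ((cmod z)^2)"
  by (metis complex_norm_square mult.commute)

lemma ip_self: "ip x x = complex_of_real (\<Sum>i\<in>UNIV. (cmod (x $ i))^2)"
  unfolding ip_def cnj_mult_self of_real_sum ..

lemma ip_self_eq0: "ip x x = 0 \<longleftrightarrow> x = 0"
proof -
  have "(\<Sum>i\<in>UNIV. (cmod (x $ i))^2) = 0 \<longleftrightarrow> (\<forall>i. (cmod (x $ i))^2 = 0)"
    by (subst sum_nonneg_eq_0_iff) auto
  then show ?thesis unfolding ip_self of_real_eq_0_iff by (simp add: vec_eq_iff)
qed

lemma ip_self_Re: "Re (ip x x) \<ge> 0" "Im (ip x x) = 0"
   apply (simp only: ip_self Re_complex_of_real)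
   apply (rule sum_nonneg, simp)
  apply (simp only: ip_self Im_complex_of_real)
  done

lemma ip_self_pos: "x \<noteq> 0 \<Longrightarrow> Re (ip x x) > 0"
  using ip_self_Re(1)[of x] ip_self_eq0[of x] ip_self_Re(2)[of x]
  by (metis complex_eq_iff less_eq_real_def zero_complex.simps)

lemma ip_cnj: "cnj (ip x y) = ip y x"
  by (simp add: ip_def mult.commute)

lemma herm_qform_real:
  assumes "cadjoint A = A" shows "Im (ip x (A *v x)) = 0"
proof -
  have "cnj (ip x (A *v x)) = ip (A *v x) x" by (rule ip_cnj)
  also have "\<dots> = ip x (A *v x)"
    using ip_cnj ip_adj[of x A x] assms by (metis ip_cnj)
  finally show ?thesis by (metis Reals_cnj_iff complex_is_Real_iff)
qed

lemma mat_eq_zero_iff_vec: "(X::complex^'n^'n) = 0 \<longleftrightarrow> (\<forall>x. X *v x = 0)"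
proof
  assume "\<forall>x. X *v x = 0"
  then have "\<forall>x. X *v x = 0 *v x" by simp
  then show "X = 0" using matrix_eq by blast
qed simp

definition peval :: "complex poly \<Rightarrow> complex^'n^'n \<Rightarrow> complex^'n^'n" where
  "peval p M = fold_coeffs (\<lambda>a Y. mat a + M ** Y) p 0"

lemma peval_0[simp]: "peval 0 M = 0"
  by (simp add: peval_def)

lemma peval_pCons[simp]: "peval (pCons a p) M = mat a + M ** peval p M"
  by (cases "p = 0 \<and> a = 0") (auto simp add: peval_def)

lemma peval_const: "peval [:c:] M = mat c"
  by simp

lemma peval_1: "peval 1 M = mat 1"
  by (simp add: one_pCons)

lemma peval_add: "peval (p + q) M = peval p M + peval q M"
proof (induct p arbitrary: q)
  case 0 then show ?case by simp
next
  case (pCons a p)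
  show ?case
    proof (cases q)
      case (pCons b q')
      then show ?thesis by (simp add: pCons.hyps matrix_add_ldistrib mat_add[symmetric] add_ac)
    qed
qed

lemma peval_smult: "peval (smult c p) M = mat c ** peval p M"
proof (induct p)
  case 0 then show ?case by simp
next
  case (pCons a p)
  have "mat c ** (mat a + M ** peval p M) = mat (c * a) + (mat c ** M) ** peval p M"
    by (simp add: matrix_add_ldistrib mat_mat matrix_mul_assoc)
  also have "\<dots> = mat (c * a) + M ** (mat c ** peval p M)"
    by (simp add: matrix_mul_assoc mat_comm[of c M])
  finally have "mat c ** (mat a + M ** peval p M) = mat (c * a) + M ** (mat c ** peval p M)" .
  then show ?case by (simp add: pCons.hyps)
qed

lemma peval_minus: "peval (- p) M = - peval p M"
proof -
  have "peval (- p) M + peval p M = 0"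
    by (simp flip: peval_add)
  then show ?thesis by (simp add: eq_neg_iff_add_eq_0)
qed

lemma peval_diff: "peval (p - q) M = peval p M - peval q M"
  using peval_add[of p "- q" M] by (simp add: peval_minus)

lemma peval_mult: "peval (p * q) M = peval p M ** peval q M"
proof (induct p)
  case 0 then show ?case by simp
next
  case (pCons a p)
  show ?case
    by (simp add: peval_add peval_smult pCons.hyps matrix_add_rdistrib' matrix_mul_assoc)
qed

lemma peval_X: "peval [:-z, 1:] (M::complex^'n^'n) = M - mat z"
proof -
  have "mat (-z) + M = M - (mat z :: complex^'n^'n)"
    by (simp add: vec_eq_iff mat_def)
  then show ?thesis by simp
qed

lemma peval_commute:
  assumes "T ** M = M ** T"
  shows "T ** peval p M = peval p M ** T"
proof (induct p)
  case 0 then show ?case by simp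
next
  case (pCons a p)
  have "T ** (mat a + M ** peval p M) = mat a ** T + M ** (T ** peval p M)"
    by (simp add: matrix_add_ldistrib matrix_mul_assoc assms mat_comm[of a T])
  also have "\<dots> = (mat a + M ** peval p M) ** T"
    by (simp add: pCons.hyps matrix_add_rdistrib' matrix_mul_assoc)
  finally show ?case by simp
qed

lemma peval_commute_M: "M ** peval p M = peval p M ** M"
  by (rule peval_commute) simp

lemma peval_commute2: "peval q M ** peval p M = peval p M ** peval q M"
  by (rule peval_commute) (simp add: peval_commute_M)

definition cp :: "real poly \<Rightarrow> complex poly" where
  "cp p = map_poly complex_of_real p"

lemma cp_pCons: "cp (pCons a p) = pCons (complex_of_real a) (cp p)"
  by (simp add: cp_def map_poly_pCons)

lemma cp_0[simp]: "cp 0 = 0" by (simp add: cp_def)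

lemma cp_mult: "cp (p * q) = cp p * cp q"
  by (simp add: cp_def poly_eq_iff coeff_map_poly coeff_mult of_real_sum)

lemma cp_add: "cp (p + q) = cp p + cp q"
  by (simp add: cp_def poly_eq_iff coeff_map_poly)

lemma cp_diff: "cp (p - q) = cp p - cp q"
  by (simp add: cp_def poly_eq_iff coeff_map_poly)

lemma cp_1: "cp 1 = 1"
  by (simp add: cp_def)

lemma cp_power: "cp (p ^ k) = cp p ^ k"
  by (induct k) (simp_all add: cp_1 cp_mult)

lemma cp_X: "cp [:-a, 1:] = [:- complex_of_real a, 1:]"
  by (simp add: cp_pCons cp_1 one_pCons[symmetric])

lemma cp_prod_list: "cp (\<Prod>x\<leftarrow>xs. f x) = (\<Prod>x\<leftarrow>xs. cp (f x))"
  by (induct xs) (simp_all add: cp_1 cp_mult)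

lemma poly_cp: "poly (cp p) (complex_of_real x) = complex_of_real (poly p x)"
  by (induct p) (simp_all add: cp_pCons)

lemma peval_cp_herm:
  assumes "cadjoint M = M"
  shows "cadjoint (peval (cp p) M) = peval (cp p) M"
proof (induct p)
  case 0 then show ?case by (simp add: cadjoint_zero)
next
  case (pCons a p)
  show ?case
    by (simp add: cp_pCons cadjoint_add cadjoint_mult cadjoint_mat pCons.hyps assms
        peval_commute_M)
qed


lemma peval_monom1_Suc: "peval (monom 1 (Suc k)) M = M ** peval (monom 1 k) M"
  by (simp add: monom_Suc)

lemma peval_monom: "peval (monom c k) M = mat c ** peval (monom 1 k) M"
  using peval_smult[of c "monom 1 k" M] by (simp add: smult_monom)

lemma peval_monom_real: "peval (monom (complex_of_real r) k) M = r *\<^sub>R peval (monom 1 k) M"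
  by (subst peval_monom) (rule mat_scaleR)

lemma peval_sum: "peval (\<Sum>i\<in>A. f i) M = (\<Sum>i\<in>A. peval (f i) M)"
  by (induct A rule: infinite_finite_induct) (simp_all add: peval_add)

lemma exists_annih:
  fixes M :: "complex^'n^'n"
  shows "\<exists>p. p \<noteq> 0 \<and> peval p M = 0"
proof -
  define D where "D = DIM(complex^'n^'n)"
  define f where "f k = peval (monom 1 k) M" for k
  show ?thesis
  proof (cases "inj_on f {..D}")
    case False
    then obtain i j where ij: "i \<le> D" "j \<le> D" "i \<noteq> j" "f i = f j"
      unfolding inj_on_def by auto
    define p :: "complex poly" where "p = monom 1 j - monom 1 i"
    have "coeff p j = 1" using ij by (simp add: p_def)
    then have "p \<noteq> 0" by auto
    moreover have "peval p M = 0" using ij by (simp add: p_def peval_diff f_def)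
    ultimately show ?thesis by blast
  next
    case True
    define S where "S = f ` {..D}"
    have "card S = Suc D" using True by (simp add: S_def card_image)
    then have "real_vector.dependent S"
      by (intro dependent_biggerset) (simp add: D_def)
    then obtain t u where tu: "finite t" "t \<subseteq> S" "(\<Sum>v\<in>t. u v *\<^sub>R v) = 0" "\<exists>v\<in>t. u v \<noteq> 0"
      unfolding real_vector.dependent_explicit by blast
    define c where "c k = (if f k \<in> t then u (f k) else 0)" for k
    define p where "p = (\<Sum>k\<in>{..D}. monom (complex_of_real (c k)) k)"
    from tu(4) obtain v where v: "v \<in> t" "u v \<noteq> 0" by blast
    with tu(2) obtain k where k: "k \<le> D" "v = f k" unfolding S_def by auto
    have "coeff p k = complex_of_real (c k)"
      using k by (simp add: p_def coeff_sum)
    also have "\<dots> \<noteq> 0" using v k by (simp add: c_def)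
    finally have "p \<noteq> 0" by auto
    moreover have "peval p M = 0"
    proof -
      have "peval p M = (\<Sum>k\<in>{..D}. c k *\<^sub>R f k)"
        unfolding p_def peval_sum peval_monom_real f_def ..
      also have "\<dots> = (\<Sum>w\<in>S. (if w \<in> t then u w else 0) *\<^sub>R w)"
        unfolding S_def using True by (simp add: sum.reindex c_def)
      also have "\<dots> = (\<Sum>w\<in>t. u w *\<^sub>R w)"
        using tu(1,2) by (simp add: if_distrib[of "\<lambda>x. x *\<^sub>R _"] sum.If_cases Int_absorb1 S_def)
      finally show ?thesis using tu(3) by simp
    qed
    ultimately show ?thesis by blast
  qed
qed


lemma mat_mult_vec: "(mat z :: complex^'n^'n) *v x = z *s x"
  by (simp add: vec_eq_iff matrix_vector_mult_def mat_def if_distrib if_distribR sum.delta cong: if_cong)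

lemma ip_scale: "ip x (z *s y) = z * ip x y"
  by (simp add: ip_def sum_distrib_left mult_ac)

lemma shift_kernel:
  fixes M :: "complex^'n^'n"
  assumes herm: "cadjoint M = M" and pd: "\<forall>x. x \<noteq> 0 \<longrightarrow> 0 < Re (qform M x)"
    and kx: "(M - mat z) *v x = 0" and x0: "x \<noteq> 0"
  shows "z = complex_of_real (Re z) \<and> Re z > 0"
proof -
  have Mx: "M *v x = z *s x"
    using kx by (simp add: matrix_vector_mult_diff_rdistrib mat_mult_vec)
  have e: "ip x (M *v x) = z * ip x x"
    by (simp add: Mx ip_scale)
  define r where "r = Re (ip x x)"
  have r: "ip x x = complex_of_real r" "r > 0"
    using ip_self_pos[OF x0] ip_self_Re(2)[of x] by (simp_all add: complex_eq_iff r_def)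
  have "Im (z * complex_of_real r) = 0"
    using herm_qform_real[OF herm, of x] e r(1) by simp
  then have imz: "Im z = 0" using r(2) by simp
  have "Re (ip x (M *v x)) > 0" using pd x0 by (simp add: qform_ip)
  then have "Re (z * complex_of_real r) > 0" using e r(1) by simp
  then have "Re z > 0" using r(2) by (simp add: zero_less_mult_iff)
  with imz show ?thesis by (simp add: complex_eq_iff)
qed

lemma shift_commute: "(M - mat z) ** peval q M = peval q M ** (M - mat z)"
  by (rule peval_commute) (simp add: matrix_diff_rdistrib' matrix_diff_ldistrib' mat_comm[of z M])

lemma root_removal:
  fixes M Y :: "complex^'n^'n"
  assumes herm: "cadjoint M = M" and pd: "\<forall>x. x \<noteq> 0 \<longrightarrow> 0 < Re (qform M x)"
  shows "p \<noteq> 0 \<Longrightarrow> peval p M ** Y = 0 \<Longrightarrow>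
     \<exists>xs. (\<forall>x\<in>set xs. x > 0) \<and> peval (cp (\<Prod>x\<leftarrow>xs. [:-x,1:])) M ** Y = 0"
proof (induction "degree p" arbitrary: p Y rule: less_induct)
  case less
  show ?case
  proof (cases "degree p = 0")
    case True
    then have p: "p = [:coeff p 0:]" using degree_0_id by metis
    with less.prems(1) have c0: "coeff p 0 \<noteq> 0" by auto
    have "mat (coeff p 0) ** Y = 0" using less.prems(2) p by (metis peval_const)
    then have "mat (1 / coeff p 0) ** (mat (coeff p 0) ** Y) = 0" by simp
    then have "Y = 0" using c0 by (simp add: matrix_mul_assoc mat_mat)
    then show ?thesis by (intro exI[of _ "[]"]) simp
  next
    case False
    then have "\<not> constant (poly p)" by (simp add: constant_degree)
    then obtain z where "poly p z = 0" using fundamental_theorem_of_algebra by blast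
    then obtain q where pq: "p = [:-z,1:] * q" using poly_eq_0_iff_dvd by (metis dvdE)
    have q0: "q \<noteq> 0" using less.prems(1) pq by auto
    have "degree ([:-z,1:] * q) = 1 + degree q" using q0 by (subst degree_mult_eq) auto
    then have dq: "degree q < degree p" using pq by simp
    have eq0: "(M - mat z) ** (peval q M ** Y) = 0"
    proof -
      have "peval p M = (M - mat z) ** peval q M" unfolding pq peval_mult peval_X ..
      then show ?thesis using less.prems(2) by (metis matrix_mul_assoc)
    qed
    show ?thesis
    proof (cases "z = complex_of_real (Re z) \<and> Re z > 0")
      case True
      define lam where "lam = Re z"
      have zl: "z = complex_of_real lam" "lam > 0" using True by (simp_all add: lam_def)
      have "peval q M ** ((M - mat z) ** Y) = 0"
        using eq0 shift_commute[of M z q] by (metis matrix_mul_assoc)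
      from less.hyps[OF dq q0 this] obtain xs where xs: "\<forall>x\<in>set xs. x > 0"
        "peval (cp (\<Prod>x\<leftarrow>xs. [:-x,1:])) M ** ((M - mat z) ** Y) = 0" by blast
      have "cp (\<Prod>x\<leftarrow>(lam # xs). [:-x,1:]) = [:-z,1:] * cp (\<Prod>x\<leftarrow>xs. [:-x,1:])"
        by (simp only: prod_list.Cons list.map cp_mult cp_X zl(1))
      then have "peval (cp (\<Prod>x\<leftarrow>(lam # xs). [:-x,1:])) M
          = (M - mat z) ** peval (cp (\<Prod>x\<leftarrow>xs. [:-x,1:])) M"
        by (simp only: peval_mult peval_X)
      also have "\<dots> = peval (cp (\<Prod>x\<leftarrow>xs. [:-x,1:])) M ** (M - mat z)"
        by (rule shift_commute)
      finally show ?thesis using xs zl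
        by (intro exI[of _ "lam # xs"]) (simp add: matrix_mul_assoc[symmetric])
    next
      case False
      have "\<forall>v. (peval q M ** Y) *v v = 0"
      proof
        fix v
        have kv: "(M - mat z) *v ((peval q M ** Y) *v v) = 0"
          by (metis eq0 matrix_vector_mul_assoc matrix_vector_mult_0)
        show "(peval q M ** Y) *v v = 0"
        proof (rule ccontr)
          assume "(peval q M ** Y) *v v \<noteq> 0"
          from shift_kernel[OF herm pd \<open>(M - mat z) *v ((peval q M ** Y) *v v) = 0\<close> this] False
          show False by simp
        qed
      qed
      then have "peval q M ** Y = 0" using mat_eq_zero_iff_vec[of "peval q M ** Y"] by blast
      from less.hyps[OF dq q0 this] show ?thesis .
    qed
  qed
qed


lemma prod_list_dvd_power:
  "(\<Prod>x\<leftarrow>xs. [:-x,1:]) dvd (\<Prod>x\<in>set xs. ([:-x,1:]::real poly)) ^ length xs"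
proof (induct xs)
  case Nil then show ?case by simp
next
  case (Cons a xs)
  define R where "R = (\<Prod>x\<in>set (a # xs). ([:-x,1:]::real poly))"
  have "(\<Prod>x\<in>set xs. ([:-x,1:]::real poly)) dvd R"
    unfolding R_def by (rule prod_dvd_prod_subset) auto
  then have "(\<Prod>x\<leftarrow>xs. [:-x,1:]) dvd R ^ length xs"
    using Cons by (meson dvd_power_same dvd_trans)
  moreover have "[:-a,1:] dvd R" unfolding R_def by (rule dvd_prodI) auto
  ultimately have "[:-a,1:] * (\<Prod>x\<leftarrow>xs. [:-x,1:]) dvd R * R ^ length xs"
    by (rule mult_dvd_mono[rotated])
  then show ?case by (simp add: R_def)
qed

lemma herm_sq_zero:
  fixes H :: "complex^'n^'n"
  assumes "cadjoint H = H" "H ** H = 0"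
  shows "H = 0"
proof -
  have "\<forall>v. H *v v = 0"
  proof
    fix v
    have "ip (H *v v) (H *v v) = ip v (H *v (H *v v))"
      using ip_adj[of v H "H *v v"] assms(1) by simp
    also have "\<dots> = 0" using assms(2) by (simp add: matrix_vector_mul_assoc ip_def)
    finally show "H *v v = 0" using ip_self_eq0 by blast
  qed
  then show ?thesis using mat_eq_zero_iff_vec[of H] by blast
qed

lemma peval_cp_power: "peval (cp (r ^ k)) M = peval (cp (r ^ j)) M ** peval (cp (r ^ i)) M"
  if "k = j + i"
  using that by (simp add: power_add cp_mult peval_mult)

lemma nilpotent_step:
  fixes M :: "complex^'n^'n"
  assumes herm: "cadjoint M = M"
  shows "peval (cp (r ^ Suc (Suc j))) M = 0 \<Longrightarrow> peval (cp (r ^ Suc j)) M = 0"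
proof -
  assume z: "peval (cp (r ^ Suc (Suc j))) M = 0"
  let ?H = "peval (cp (r ^ Suc j)) M"
  have "?H ** ?H = peval (cp (r ^ (Suc j + Suc j))) M"
    by (rule peval_cp_power[symmetric]) simp
  also have "\<dots> = peval (cp (r ^ Suc (Suc j))) M ** peval (cp (r ^ j)) M"
    by (rule peval_cp_power) simp
  also have "\<dots> = 0" using z by simp
  finally show "?H = 0" using herm_sq_zero peval_cp_herm[OF herm] by blast
qed

lemma nilpotent_herm:
  fixes M :: "complex^'n^'n"
  assumes herm: "cadjoint M = M"
  shows "peval (cp (r ^ K)) M = 0 \<Longrightarrow> peval (cp r) M = 0"
proof (induct K rule: nat_less_induct)
  case (1 K)
  show ?case
  proof (cases K)
    case 0
    then have "(mat 1 :: complex^'n^'n) = 0" using 1(2) by (simp add: cp_1 peval_1)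
    then show ?thesis using mat_one_neq0 by blast
  next
    case (Suc j)
    show ?thesis
    proof (cases j)
      case 0 then show ?thesis using 1(2) Suc by simp
    next
      case (Suc i)
      with \<open>K = Suc j\<close> have "peval (cp (r ^ Suc i)) M = 0"
        using nilpotent_step[OF herm] 1(2) by blast
      then show ?thesis using 1(1) \<open>K = Suc j\<close> Suc by blast
    qed
  qed
qed

lemma interp:
  fixes f :: "real \<Rightarrow> real"
  shows "finite L \<Longrightarrow> \<exists>q. \<forall>x\<in>L. poly q x = f x"
proof (induct L rule: finite_induct)
  case empty then show ?case by simp
next
  case (insert a L)
  then obtain q where q: "\<forall>x\<in>L. poly q x = f x" by blast
  define R where "R = (\<Prod>x\<in>L. ([:-x,1:]::real poly))"
  have Rz: "poly R x = 0" if "x \<in> L" for x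
    using that insert(1) unfolding R_def poly_prod by (intro prod_zero) auto
  have Ra: "poly R a \<noteq> 0"
    using insert(1,2) unfolding R_def poly_prod by (subst prod_zero_iff) auto
  define q' where "q' = q + smult ((f a - poly q a) / poly R a) R"
  have "\<forall>x\<in>insert a L. poly q' x = f x"
    using q Rz Ra by (auto simp: q'_def)
  then show ?case by blast
qed

lemma vanish_dvd:
  "finite L \<Longrightarrow> (\<forall>x\<in>L. poly s x = 0) \<Longrightarrow> (\<Prod>x\<in>L. ([:-x,1:]::real poly)) dvd s"
proof (induct L arbitrary: s rule: finite_induct)
  case empty then show ?case by simp
next
  case (insert a L)
  then have "(\<Prod>x\<in>L. ([:-x,1:]::real poly)) dvd s" by blast
  then obtain w where w: "s = (\<Prod>x\<in>L. ([:-x,1:]::real poly)) * w" by (rule dvdE)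
  have "poly (\<Prod>x\<in>L. ([:-x,1:]::real poly)) a \<noteq> 0"
    using insert(1,2) unfolding poly_prod by (subst prod_zero_iff) auto
  moreover have "poly s a = 0" using insert(4) by simp
  ultimately have "poly w a = 0" using w by simp
  then obtain w' where w': "w = [:-a,1:] * w'" using poly_eq_0_iff_dvd by (metis dvdE)
  have "s = ([:-a,1:] * (\<Prod>x\<in>L. ([:-x,1:]::real poly))) * w'"
    using w w' by (simp only: mult_ac)
  then show ?case unfolding prod.insert[OF insert(1,2)] by (rule dvdI)
qed


lemma peval_cp_X: "peval (cp [:0,1:]) M = M"
proof -
  have "cp [:0,1:] = [:0,1:]" by (simp add: cp_pCons cp_1 one_pCons[symmetric])
  then show ?thesis by simp
qed

lemma sqrt_exists:
  fixes M :: "complex^'n^'n"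
  assumes herm: "cadjoint M = M" and pd: "\<forall>x. x \<noteq> 0 \<longrightarrow> 0 < Re (qform M x)"
  shows "\<exists>S. cadjoint S = S \<and> S ** S = M \<and> (\<forall>x. x \<noteq> 0 \<longrightarrow> 0 < Re (qform S x))
           \<and> (\<forall>T. T ** M = M ** T \<longrightarrow> T ** S = S ** T)"
proof -
  obtain p where p: "p \<noteq> 0" "peval p M = 0" using exists_annih by blast
  then have "peval p M ** mat 1 = 0" by simp
  from root_removal[OF herm pd p(1) this] obtain xs where xs: "\<forall>x\<in>set xs. x > 0"
    "peval (cp (\<Prod>x\<leftarrow>xs. [:-x,1:])) M = 0" by auto
  define R where "R = (\<Prod>x\<in>set xs. ([:-x,1:]::real poly))"
  obtain w where w: "R ^ length xs = (\<Prod>x\<leftarrow>xs. [:-x,1:]) * w"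
    using prod_list_dvd_power[of xs] unfolding R_def by (rule dvdE)
  have "peval (cp (R ^ length xs)) M = 0"
    unfolding w cp_mult peval_mult xs(2) by simp
  then have R0: "peval (cp R) M = 0" by (rule nilpotent_herm[OF herm])
  obtain q where q: "\<forall>x\<in>set xs. poly q x = sqrt (sqrt x)"
    using interp[of "set xs" "\<lambda>x. sqrt (sqrt x)"] by blast
  define s where "s = q * q * (q * q) - [:0,1:]"
  have "\<forall>x\<in>set xs. poly s x = 0"
  proof
    fix x assume x: "x \<in> set xs"
    then have "x > 0" using xs(1) by blast
    then have "sqrt (sqrt x) * sqrt (sqrt x) * (sqrt (sqrt x) * sqrt (sqrt x)) = x"
      by simp
    then show "poly s x = 0" using q x by (simp add: s_def)
  qed
  then have "R dvd s" unfolding R_def by (intro vanish_dvd) auto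
  then obtain w2 where w2: "s = R * w2" by (rule dvdE)
  define Q where "Q = peval (cp q) M"
  have "peval (cp s) M = 0" unfolding w2 cp_mult peval_mult R0 by simp
  then have SS: "(Q ** Q) ** (Q ** Q) = M"
    unfolding s_def cp_diff cp_mult peval_diff peval_mult peval_cp_X Q_def by simp
  have hQ: "cadjoint Q = Q" unfolding Q_def by (rule peval_cp_herm[OF herm])
  define S where "S = Q ** Q"
  have hS: "cadjoint S = S" by (simp add: S_def cadjoint_mult hQ)
  have qS: "qform S x = ip (Q *v x) (Q *v x)" for x
    using ip_adj[of x Q "Q *v x"] hQ by (simp add: qform_ip S_def matrix_vector_mul_assoc)
  have pS: "0 < Re (qform S x)" if "x \<noteq> 0" for x
  proof -
    have "M *v x \<noteq> 0"
    proof
      assume "M *v x = 0"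
      then have "qform M x = 0" by (simp add: qform_ip ip_def)
      then show False using pd that by fastforce
    qed
    then have "Q *v x \<noteq> 0" using SS by (metis matrix_vector_mul_assoc matrix_vector_mult_0_right)
    then show ?thesis unfolding qS by (rule ip_self_pos)
  qed
  have cS: "T ** S = S ** T" if "T ** M = M ** T" for T
  proof -
    have "T ** Q = Q ** T" unfolding Q_def by (rule peval_commute[OF that])
    then show ?thesis by (simp add: S_def matrix_mul_assoc) (metis matrix_mul_assoc)
  qed
  show ?thesis using hS SS pS cS unfolding S_def[symmetric] by blast
qed


lemma qform_add: "qform ((X::complex^'n^'n) + Y) x = qform X x + qform Y x"
  by (simp add: qform_def matrix_vector_mult_add_rdistrib distrib_left sum.distrib)

lemma scaleR_complex_mult: "r *\<^sub>R (z::complex) = complex_of_real r * z"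
  by (simp add: scaleR_conv_of_real)

lemma qform_scaleR: "qform (r *\<^sub>R (X::complex^'n^'n)) x = complex_of_real r * qform X x"
  by (simp add: qform_def matrix_vector_mult_def sum_distrib_left sum_distrib_right
      scaleR_complex_mult mult_ac)

lemma sqrt_unique:
  fixes M S T :: "complex^'n^'n"
  assumes hS: "cadjoint S = S" and SS: "S ** S = M" and pS: "\<forall>x. x \<noteq> 0 \<longrightarrow> 0 < Re (qform S x)"
    and cS: "\<forall>T. T ** M = M ** T \<longrightarrow> T ** S = S ** T"
    and psdT: "pos_semidef_mat T" and TT: "T ** T = M"
  shows "T = S"
proof -
  have "T ** M = M ** T" unfolding TT[symmetric] by (simp add: matrix_mul_assoc)
  then have TS: "T ** S = S ** T" using cS by blast
  have z: "(S + T) ** (S - T) = 0"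
    by (simp add: matrix_add_rdistrib' matrix_diff_ldistrib' SS TT TS)
  have "\<forall>v. (S - T) *v v = 0"
  proof
    fix v
    define w where "w = (S - T) *v v"
    have "(S + T) *v w = 0" unfolding w_def using z
      by (metis matrix_vector_mul_assoc matrix_vector_mult_0)
    then have "qform (S + T) w = 0" by (simp add: qform_ip ip_def)
    then have "Re (qform S w) + Re (qform T w) = 0"
      by (metis qform_add plus_complex.sel(1) zero_complex.sel(1))
    moreover have "Re (qform T w) \<ge> 0" using psdT by (simp add: pos_semidef_mat_def)
    ultimately have "\<not> 0 < Re (qform S w)" by linarith
    then show "(S - T) *v v = 0" using pS unfolding w_def by blast
  qed
  then have "S - T = 0" using mat_eq_zero_iff_vec[of "S - T"] by blast
  then show ?thesis by simp
qed

lemma msqrt_props: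
  fixes M :: "complex^'n^'n"
  assumes herm: "cadjoint M = M" and pd: "\<forall>x. x \<noteq> 0 \<longrightarrow> 0 < Re (qform M x)"
  shows "cadjoint (msqrt M) = msqrt M \<and> msqrt M ** msqrt M = M \<and>
         (\<forall>x. x \<noteq> 0 \<longrightarrow> 0 < Re (qform (msqrt M) x))"
proof -
  obtain S where S: "cadjoint S = S" "S ** S = M" "\<forall>x. x \<noteq> 0 \<longrightarrow> 0 < Re (qform S x)"
    "\<forall>T. T ** M = M ** T \<longrightarrow> T ** S = S ** T"
    using sqrt_exists[OF herm pd] by blast
  have "0 \<le> Re (qform S x)" for x
  proof (cases "x = 0")
    case True then show ?thesis by (simp add: qform_def)
  next
    case False then show ?thesis using S(3) less_imp_le by blast
  qed
  then have psd: "pos_semidef_mat S" unfolding pos_semidef_mat_def using S(1) by blast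
  have "msqrt M = S" unfolding msqrt_def
  proof (rule the_equality)
    show "pos_semidef_mat S \<and> S ** S = M" using psd S(2) by blast
    fix T assume "pos_semidef_mat T \<and> T ** T = M"
    then show "T = S" using sqrt_unique[OF S(1) S(2) S(3) S(4)] by blast
  qed
  then show ?thesis using S(1-3) by simp
qed


lemma ring_id: "(l::complex) * (a*a') + (1-l)*(b*b') - (l*a + (1-l)*b)*(l*a' + (1-l)*b') = l*(1-l)*((a-b)*(a'-b'))"
  by algebra

lemma trace_scale: "complex_of_real r * trace (X::complex^'n^'n) = trace (r *\<^sub>R X)"
  by (simp add: trace_def sum_distrib_left scaleR_complex_mult)

lemma qform_sq:
  fixes A :: "complex^'n^'n"
  assumes "cadjoint A = A"
  shows "qform (A ** A) x = ip (A *v x) (A *v x)"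
  using ip_adj[of x A "A *v x"] assms by (simp add: qform_ip matrix_vector_mul_assoc)

lemma pd_nonzero:
  fixes A :: "complex^'n^'n"
  assumes "\<forall>x. x \<noteq> 0 \<longrightarrow> 0 < Re (qform A x)" "x \<noteq> 0"
  shows "A *v x \<noteq> 0"
proof
  assume "A *v x = 0"
  then have "qform A x = 0" by (simp add: qform_ip ip_def)
  then show False using assms by fastforce
qed

theorem lemma2p1:
  fixes A B :: "complex^'n^'n" and l :: real
  assumes "pos_def_mat A" and "pos_def_mat B" and "0 < l" and "l < 1"
  shows "trace (msqrt (l *\<^sub>R (A ** A) + (1 - l) *\<^sub>R (B ** B)) - (l *\<^sub>R A + (1 - l) *\<^sub>R B))
       = complex_of_real (l * (1 - l)) *
         trace (((A - B) ** (A - B)) **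
                matrix_inv (msqrt (l *\<^sub>R (A ** A) + (1 - l) *\<^sub>R (B ** B)) + (l *\<^sub>R A + (1 - l) *\<^sub>R B)))"
proof -
  define M where "M = l *\<^sub>R (A ** A) + (1 - l) *\<^sub>R (B ** B)"
  define C where "C = l *\<^sub>R A + (1 - l) *\<^sub>R B"
  have hA: "cadjoint A = A" and pA: "\<forall>x. x \<noteq> 0 \<longrightarrow> 0 < Re (qform A x)"
    using assms(1) by (auto simp: pos_def_mat_def)
  have hB: "cadjoint B = B" and pB: "\<forall>x. x \<noteq> 0 \<longrightarrow> 0 < Re (qform B x)"
    using assms(2) by (auto simp: pos_def_mat_def)
  have hM: "cadjoint M = M"
    by (simp add: M_def cadjoint_add cadjoint_scaleR cadjoint_mult hA hB)
  have pM: "\<forall>x. x \<noteq> 0 \<longrightarrow> 0 < Re (qform M x)"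
  proof (intro allI impI)
    fix x :: "complex^'n" assume x: "x \<noteq> 0"
    have e: "Re (qform M x) = l * Re (ip (A *v x) (A *v x)) + (1 - l) * Re (ip (B *v x) (B *v x))"
      by (simp add: M_def qform_add qform_scaleR qform_sq hA hB)
    have "0 < Re (ip (A *v x) (A *v x))" using ip_self_pos pd_nonzero[OF pA x] by blast
    moreover have "0 \<le> Re (ip (B *v x) (B *v x))" by (rule ip_self_Re)
    ultimately show "0 < Re (qform M x)" unfolding e using assms(3,4)
      by (simp add: add_pos_nonneg)
  qed
  define S where "S = msqrt M"
  have hS: "cadjoint S = S" and SS: "S ** S = M" and pS: "\<forall>x. x \<noteq> 0 \<longrightarrow> 0 < Re (qform S x)"
    using msqrt_props[OF hM pM] by (auto simp: S_def)
  define P where "P = S + C"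
  have injP: "\<forall>x. P *v x = 0 \<longrightarrow> x = 0"
  proof (intro allI impI)
    fix x assume Px: "P *v x = 0"
    show "x = 0"
    proof (rule ccontr)
      assume x: "x \<noteq> 0"
      have "qform P x = 0" using Px by (simp add: qform_ip ip_def)
      then have "Re (qform P x) = 0" by simp
      moreover have "qform P x = qform S x + (complex_of_real l * qform A x
          + complex_of_real (1 - l) * qform B x)"
        by (simp only: P_def C_def qform_add qform_scaleR)
      ultimately have "Re (qform S x) + l * Re (qform A x) + (1 - l) * Re (qform B x) = 0"
        by (simp del: of_real_diff)
      moreover have "0 < Re (qform S x)" "0 < Re (qform A x)" "0 < Re (qform B x)"
        using pS pA pB x by auto
      ultimately show False using assms(3,4)
        by (smt (verit) mult_pos_pos)
    qed
  qed
  then have "\<exists>B'. B' ** P = mat 1" using matrix_left_invertible_ker by blast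
  then have "invertible P" using invertible_left_inverse by blast
  define Pi where "Pi = matrix_inv P"
  have PPi: "P ** Pi = mat 1 \<and> Pi ** P = mat 1"
    unfolding Pi_def matrix_inv_def
    by (rule someI_ex) (use \<open>invertible P\<close> in \<open>simp add: invertible_def\<close>)
  have key: "M - C ** C = (l * (1 - l)) *\<^sub>R ((A - B) ** (A - B))"
  proof -
    have "(M - C ** C) $ i $ j = ((l * (1 - l)) *\<^sub>R ((A - B) ** (A - B))) $ i $ j" for i j
    proof -
      have "(M - C ** C) $ i $ j = (\<Sum>k\<in>UNIV. complex_of_real l * (A$i$k * A$k$j)
           + (1 - complex_of_real l) * (B$i$k * B$k$j)
           - (complex_of_real l * A$i$k + (1 - complex_of_real l) * B$i$k)
             * (complex_of_real l * A$k$j + (1 - complex_of_real l) * B$k$j))"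
        by (simp add: M_def C_def matrix_matrix_mult_def scaleR_complex_mult sum_distrib_left
            sum.distrib sum_subtractf)
      also have "\<dots> = (\<Sum>k\<in>UNIV. complex_of_real l * (1 - complex_of_real l)
           * ((A$i$k - B$i$k) * (A$k$j - B$k$j)))"
        by (rule sum.cong[OF refl]) (rule ring_id)
      also have "\<dots> = ((l * (1 - l)) *\<^sub>R ((A - B) ** (A - B))) $ i $ j"
        by (simp add: matrix_matrix_mult_def scaleR_complex_mult sum_distrib_left)
      finally show ?thesis .
    qed
    then show ?thesis by (simp add: vec_eq_iff)
  qed
  have split: "S ** S - C ** C = (S - C) ** P + C ** P - P ** C"
    by (simp add: P_def matrix_add_ldistrib matrix_add_rdistrib' matrix_diff_rdistrib' algebra_simps)
  have "complex_of_real (l * (1 - l)) * trace ((A - B) ** (A - B) ** Pi)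
      = trace (((l * (1 - l)) *\<^sub>R ((A - B) ** (A - B))) ** Pi)"
    by (simp only: trace_scale scalar_matrix_assoc)
  also have "\<dots> = trace (((S - C) ** P + C ** P - P ** C) ** Pi)"
    by (simp only: key[symmetric] SS[symmetric] split)
  also have "\<dots> = trace ((S - C) ** (P ** Pi) + C ** (P ** Pi) - P ** (C ** Pi))"
    by (simp only: matrix_add_rdistrib' matrix_diff_rdistrib' matrix_mul_assoc)
  also have "\<dots> = trace (S - C) + trace C - trace (P ** (C ** Pi))"
    using PPi by (simp add: trace_add trace_sub)
  also have "trace (P ** (C ** Pi)) = trace C"
    using PPi by (simp add: trace_mul_sym[of P] matrix_mul_assoc[symmetric])
  finally have "trace (S - C) = complex_of_real (l * (1 - l)) * trace ((A - B) ** (A - B) ** Pi)"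
    by simp
  then show ?thesis by (simp only: S_def M_def C_def Pi_def P_def)
qed

end
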